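(* A graph $G$ is $\gamma\gamma_{\rm cer}$-perfect if and only if $G$ is $P_4$-free.
   Context: All graphs are finite and simple. A graph is $P_4$-free if it has no induced subgraph isomorphic to the path $P_4$ on four vertices. A set $D\subseteq V_G$ is a dominating set of $G$ if every vertex of $V_G-D$ has a neighbor in $D$; $\gamma(G)$ is the minimum cardinality of a dominating set. A set $D\subseteq V_G$ is a certified dominating set of $G$ if $D$ is a dominating set of $G$ and every vertex of $D$ has either zero or at least two neighbors in $V_G-D$; $\gamma_{\rm cer}(G)$ is the minimum cardinality of a certified dominating set of $G$. A graph $G$ is $\gamma\gamma_{\rm cer}$-perfect if $\gamma(H)=\gamma_{\rm cer}(H)$ for every induced connected subgraph $H$ of $G$ with $H\neq K_2$. *)

theory Defs
  imports Main
begin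

definition simple_graph :: "'a set \<Rightarrow> ('a \<Rightarrow> 'a \<Rightarrow> bool) \<Rightarrow> bool" where
  "simple_graph V E \<longleftrightarrow> finite V \<and> (\<forall>x y. E x y \<longrightarrow> E y x) \<and> (\<forall>x. \<not> E x x)
     \<and> (\<forall>x y. E x y \<longrightarrow> x \<in> V \<and> y \<in> V)"

definition induced_edges :: "('a \<Rightarrow> 'a \<Rightarrow> bool) \<Rightarrow> 'a set \<Rightarrow> 'a \<Rightarrow> 'a \<Rightarrow> bool" where
  "induced_edges E S = (\<lambda>x y. E x y \<and> x \<in> S \<and> y \<in> S)"

definition connected_graph :: "'a set \<Rightarrow> ('a \<Rightarrow> 'a \<Rightarrow> bool) \<Rightarrow> bool" where
  "connected_graph V E \<longleftrightarrow> V \<noteq> {} \<and>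
     (\<forall>x\<in>V. \<forall>y\<in>V. (x, y) \<in> {(u, v). E u v}\<^sup>*)"

definition is_K2 :: "'a set \<Rightarrow> ('a \<Rightarrow> 'a \<Rightarrow> bool) \<Rightarrow> bool" where
  "is_K2 V E \<longleftrightarrow> card V = 2 \<and> (\<forall>x\<in>V. \<forall>y\<in>V. x \<noteq> y \<longrightarrow> E x y)"

definition dominating_set :: "'a set \<Rightarrow> ('a \<Rightarrow> 'a \<Rightarrow> bool) \<Rightarrow> 'a set \<Rightarrow> bool" where
  "dominating_set V E D \<longleftrightarrow> D \<subseteq> V \<and> (\<forall>v\<in>V - D. \<exists>u\<in>D. E v u)"

definition certified_dominating_set :: "'a set \<Rightarrow> ('a \<Rightarrow> 'a \<Rightarrow> bool) \<Rightarrow> 'a set \<Rightarrow> bool" where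
  "certified_dominating_set V E D \<longleftrightarrow> dominating_set V E D \<and>
     (\<forall>v\<in>D. card {u \<in> V - D. E v u} = 0 \<or> card {u \<in> V - D. E v u} \<ge> 2)"

definition domination_number :: "'a set \<Rightarrow> ('a \<Rightarrow> 'a \<Rightarrow> bool) \<Rightarrow> nat" where
  "domination_number V E = Min (card ` {D. dominating_set V E D})"

definition certified_domination_number :: "'a set \<Rightarrow> ('a \<Rightarrow> 'a \<Rightarrow> bool) \<Rightarrow> nat" where
  "certified_domination_number V E = Min (card ` {D. certified_dominating_set V E D})"

definition gamma_gamma_cer_perfect :: "'a set \<Rightarrow> ('a \<Rightarrow> 'a \<Rightarrow> bool) \<Rightarrow> bool" where
  "gamma_gamma_cer_perfect V E \<longleftrightarrow>
     (\<forall>S \<subseteq> V. connected_graph S (induced_edges E S) \<and> \<not> is_K2 S (induced_edges E S) \<longrightarrow>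
        domination_number S (induced_edges E S) = certified_domination_number S (induced_edges E S))"

definition P4_free :: "'a set \<Rightarrow> ('a \<Rightarrow> 'a \<Rightarrow> bool) \<Rightarrow> bool" where
  "P4_free V E \<longleftrightarrow> \<not> (\<exists>a\<in>V. \<exists>b\<in>V. \<exists>c\<in>V. \<exists>d\<in>V. distinct [a, b, c, d] \<and>
     E a b \<and> E b c \<and> E c d \<and> \<not> E a c \<and> \<not> E a d \<and> \<not> E b d)"

end

theory Submission
  imports Defs
begin


definition disc :: "('a \<Rightarrow> 'a \<Rightarrow> bool) \<Rightarrow> 'a set \<Rightarrow> bool" where
  "disc R S \<longleftrightarrow> (\<exists>A B. A \<union> B = S \<and> A \<inter> B = {} \<and> A \<noteq> {} \<and> B \<noteq> {} \<and> (\<forall>a\<in>A. \<forall>b\<in>B. \<not> R a b))"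

definition cgr :: "('a \<Rightarrow> 'a \<Rightarrow> bool) \<Rightarrow> 'a \<Rightarrow> 'a \<Rightarrow> bool" where
  "cgr R = (\<lambda>x y. x \<noteq> y \<and> \<not> R x y)"

lemma two_le_card: "finite X \<Longrightarrow> x \<in> X \<Longrightarrow> y \<in> X \<Longrightarrow> x \<noteq> y \<Longrightarrow> 2 \<le> card X"
proof -
  assume "finite X" "x \<in> X" "y \<in> X" "x \<noteq> y"
  then have "card {x, y} \<le> card X" by (intro card_mono) auto
  then show ?thesis using \<open>x \<noteq> y\<close> by simp
qed

lemma two_elems: "finite X \<Longrightarrow> 2 \<le> card X \<Longrightarrow> \<exists>x y. x \<in> X \<and> y \<in> X \<and> x \<noteq> y"
  using card_le_Suc0_iff_eq[of X] by auto

lemma P4_free_mono: "P4_free S R \<Longrightarrow> T \<subseteq> S \<Longrightarrow> P4_free T R"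
  unfolding P4_free_def by blast

lemma P4_free_cgr:
  assumes sym: "\<forall>x y. R x y \<longrightarrow> R y x" and p: "P4_free S R"
  shows "P4_free S (cgr R)"
  unfolding P4_free_def
proof
  assume "\<exists>a\<in>S. \<exists>b\<in>S. \<exists>c\<in>S. \<exists>d\<in>S. distinct [a, b, c, d] \<and> cgr R a b \<and> cgr R b c \<and> cgr R c d \<and>
     \<not> cgr R a c \<and> \<not> cgr R a d \<and> \<not> cgr R b d"
  then obtain a b c d where m: "a\<in>S" "b\<in>S" "c\<in>S" "d\<in>S" and h: "distinct [a, b, c, d]" "cgr R a b" "cgr R b c" "cgr R c d"
     "\<not> cgr R a c" "\<not> cgr R a d" "\<not> cgr R b d" by blast
  have "distinct [c, a, d, b] \<and> R c a \<and> R a d \<and> R d b \<and> \<not> R c d \<and> \<not> R c b \<and> \<not> R a b"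
    using h sym unfolding cgr_def by auto
  then show False using p m unfolding P4_free_def by blast
qed

lemma cc_eq: "a \<noteq> b \<Longrightarrow> cgr (cgr R) a b = R a b"
  unfolding cgr_def by simp

lemma disc_cong:
  assumes eq: "\<And>a b. a \<noteq> b \<Longrightarrow> R' a b = R a b" and d: "disc R S"
  shows "disc R' S"
proof -
  obtain A B where h: "A \<union> B = S" "A \<inter> B = {}" "A \<noteq> {}" "B \<noteq> {}" "\<forall>a\<in>A. \<forall>b\<in>B. \<not> R a b"
    using d unfolding disc_def by blast
  have "\<forall>a\<in>A. \<forall>b\<in>B. \<not> R' a b"
  proof (intro ballI)
    fix a b assume ab: "a \<in> A" "b \<in> B"
    then have "a \<noteq> b" using h(2) by blast
    then show "\<not> R' a b" using eq h(5) ab by simp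
  qed
  then show ?thesis unfolding disc_def using h(1-4) by blast
qed

lemma disc_cc: "disc (cgr (cgr R)) S = disc R S"
  using disc_cong[of "cgr (cgr R)" R S] disc_cong[of R "cgr (cgr R)" S] cc_eq by metis

lemma disc_intro:
  "A \<union> B = S \<Longrightarrow> A \<inter> B = {} \<Longrightarrow> A \<noteq> {} \<Longrightarrow> B \<noteq> {} \<Longrightarrow> (\<And>a b. a \<in> A \<Longrightarrow> b \<in> B \<Longrightarrow> \<not> R a b) \<Longrightarrow> disc R S"
  unfolding disc_def by blast

lemma step_aux:
  assumes sym: "\<forall>x y. R x y \<longrightarrow> R y x" and irr: "\<forall>x. \<not> R x x"
    and p4: "P4_free (insert v (A \<union> B)) R" and vn: "v \<notin> A \<union> B"
    and AB: "A \<inter> B = {}" and nab: "\<forall>a\<in>A. \<forall>b\<in>B. \<not> R a b"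
    and x: "x \<in> A" "\<not> R v x" and z: "z \<in> B" "R v z"
  shows "disc R (insert v (A \<union> B))"
proof (cases "\<exists>y\<in>A. \<exists>x'\<in>A. R v y \<and> \<not> R v x' \<and> R y x'")
  case True
  then obtain y x' where yx: "y \<in> A" "x' \<in> A" "R v y" "\<not> R v x'" "R y x'" by blast
  have "distinct [x', y, v, z] \<and> R x' y \<and> R y v \<and> R v z \<and> \<not> R x' v \<and> \<not> R x' z \<and> \<not> R y z"
    using yx z vn AB nab sym irr by auto
  moreover have "x' \<in> insert v (A \<union> B)" "y \<in> insert v (A \<union> B)" "z \<in> insert v (A \<union> B)" 
    using yx z by auto
  ultimately have False using p4 unfolding P4_free_def by blast
  then show ?thesis ..
next
  case False
  let ?X = "{u \<in> A. \<not> R v u}"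
  let ?Y = "{u \<in> A. R v u} \<union> B \<union> {v}"
  show ?thesis
  proof (rule disc_intro[of ?X ?Y])
    show "?X \<union> ?Y = insert v (A \<union> B)" by auto
    show "?X \<inter> ?Y = {}" using vn AB by auto
    show "?X \<noteq> {}" using x by auto
    show "?Y \<noteq> {}" by auto
    fix a b assume a: "a \<in> ?X" and b: "b \<in> ?Y"
    show "\<not> R a b"
    proof
      assume r: "R a b"
      then have r': "R b a" using sym by blast
      from b consider "b \<in> A" "R v b" | "b \<in> B" | "b = v" by blast
      then show False
      proof cases
        case 1 then show False using False a r' by blast
      next
        case 2 then show False using nab a r by blast
      next
        case 3 then show False using a r' by blast
      qed
    qed
  qed
qed

lemma step:
  assumes sym: "\<forall>x y. R x y \<longrightarrow> R y x" and irr: "\<forall>x. \<not> R x x"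
    and p4: "P4_free (insert v F) R" and vF: "v \<notin> F" and d: "disc R F"
  shows "disc R (insert v F) \<or> disc (cgr R) (insert v F)"
proof -
  obtain A B where AB: "A \<union> B = F" "A \<inter> B = {}" "A \<noteq> {}" "B \<noteq> {}" "\<forall>a\<in>A. \<forall>b\<in>B. \<not> R a b"
    using d unfolding disc_def by blast
  show ?thesis
  proof (cases "\<forall>a\<in>A. \<not> R v a")
    case True
    have "disc R (insert v F)"
      apply (rule disc_intro[of A "insert v B"])
      using True AB vF sym by auto
    then show ?thesis ..
  next
    case nA: False
    show ?thesis
    proof (cases "\<forall>b\<in>B. \<not> R v b")
      case True
      have "disc R (insert v F)"
        apply (rule disc_intro[of "insert v A" B])
        using True AB vF sym by auto
      then show ?thesis ..
    next
      case nB: False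
      show ?thesis
      proof (cases "\<forall>u\<in>F. R v u")
        case True
        have "disc (cgr R) (insert v F)"
          apply (rule disc_intro[of "{v}" F])
          using True AB vF sym by (auto simp: cgr_def)
        then show ?thesis ..
      next
        case False
        then obtain x where x: "x \<in> F" "\<not> R v x" by blast
        show ?thesis
        proof (cases "x \<in> A")
          case True
          obtain z where "z \<in> B" "R v z" using nB by blast
          moreover have p4'': "P4_free (insert v (A \<union> B)) R" using p4 AB(1) by simp
          moreover have "v \<notin> A \<union> B" using vF AB(1) by simp
          ultimately have "disc R (insert v (A \<union> B))"
            using step_aux[OF sym irr p4'' _ AB(2) AB(5) True x(2)] by blast
          then show ?thesis using AB(1) by simp
        next
          case False
          then have xB: "x \<in> B" using x AB(1) by blast
          obtain z where z: "z \<in> A" "R v z" using nA by blast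
          have nba: "\<forall>a\<in>B. \<forall>b\<in>A. \<not> R a b" using AB(5) sym by blast
          have p4': "P4_free (insert v (B \<union> A)) R" using p4 AB(1) by (simp add: Un_commute)
          have vn': "v \<notin> B \<union> A" using vF AB(1) by blast
          have ba: "B \<inter> A = {}" using AB(2) by blast
          have "disc R (insert v (B \<union> A))"
            using step_aux[OF sym irr p4' vn' ba nba xB x(2) z] .
          then show ?thesis using AB(1) by (simp add: Un_commute)
        qed
      qed
    qed
  qed
qed

lemma cograph:
  assumes "finite S" "\<forall>x y. R x y \<longrightarrow> R y x" "\<forall>x. \<not> R x x" "P4_free S R" "2 \<le> card S"
  shows "disc R S \<or> disc (cgr R) S"
  using assms
proof (induction S rule: finite_induct)
  case empty
  then show ?case by simp
next
  case (insert v F)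
  have p4F: "P4_free F R" using insert.prems(3) P4_free_mono by blast
  show ?case
  proof (cases "2 \<le> card F")
    case True
    then have "disc R F \<or> disc (cgr R) F" using insert.IH[OF insert.prems(1,2) p4F True] by blast
    then show ?thesis
    proof
      assume "disc R F" then show ?thesis using step[OF insert.prems(1,2,3) insert.hyps(2)] by blast
    next
      assume d: "disc (cgr R) F"
      have s2: "\<forall>x y. cgr R x y \<longrightarrow> cgr R y x" "\<forall>x. \<not> cgr R x x"
        using insert.prems unfolding cgr_def by auto
      have "P4_free (insert v F) (cgr R)" using P4_free_cgr[OF insert.prems(1,3)] .
      then have "disc (cgr R) (insert v F) \<or> disc (cgr (cgr R)) (insert v F)"
        using step[OF s2 _ insert.hyps(2) d] by blast
      then show ?thesis using disc_cc by blast
    qed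
  next
    case False
    then have "card F = 1" using insert by simp
    then obtain u where F: "F = {u}" using card_1_singleton_iff by (metis One_nat_def)
    then have uv: "u \<noteq> v" using insert.hyps by auto
    show ?thesis
    proof (cases "R v u")
      case True
      have "disc (cgr R) (insert v F)"
        apply (rule disc_intro[of "{v}" "{u}"])
        using True F uv insert.prems by (auto simp: cgr_def)
      then show ?thesis ..
    next
      case False
      have "disc R (insert v F)"
        apply (rule disc_intro[of "{v}" "{u}"])
        using False F uv insert.prems by auto
      then show ?thesis ..
    qed
  qed
qed




lemma dom_V: "dominating_set V E V" unfolding dominating_set_def by auto
lemma cert_V: "certified_dominating_set V E V"
  unfolding certified_dominating_set_def using dom_V by auto

lemma fin_dom: "finite V \<Longrightarrow> finite {D. dominating_set V E D}"
  by (rule finite_subset[of _ "Pow V"]) (auto simp: dominating_set_def)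
lemma fin_cert: "finite V \<Longrightarrow> finite {D. certified_dominating_set V E D}"
  by (rule finite_subset[of _ "Pow V"]) (auto simp: dominating_set_def certified_dominating_set_def)

lemma gamma_le: "finite V \<Longrightarrow> dominating_set V E D \<Longrightarrow> domination_number V E \<le> card D"
  unfolding domination_number_def using fin_dom by (intro Min_le) auto
lemma cer_le: "finite V \<Longrightarrow> certified_dominating_set V E D \<Longrightarrow> certified_domination_number V E \<le> card D"
  unfolding certified_domination_number_def using fin_cert by (intro Min_le) auto

lemma gamma_ex: "finite V \<Longrightarrow> \<exists>D. dominating_set V E D \<and> domination_number V E = card D"
proof -
  assume f: "finite V"
  have "Min (card ` {D. dominating_set V E D}) \<in> card ` {D. dominating_set V E D}"
    using fin_dom[OF f] dom_V by (intro Min_in) auto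
  then show ?thesis unfolding domination_number_def by auto
qed
lemma cer_ex: "finite V \<Longrightarrow> \<exists>D. certified_dominating_set V E D \<and> certified_domination_number V E = card D"
proof -
  assume f: "finite V"
  have "Min (card ` {D. certified_dominating_set V E D}) \<in> card ` {D. certified_dominating_set V E D}"
    using fin_cert[OF f] cert_V by (intro Min_in) auto
  then show ?thesis unfolding certified_domination_number_def by auto
qed

lemma gamma_le_cer: "finite V \<Longrightarrow> domination_number V E \<le> certified_domination_number V E"
  using cer_ex[of V E] gamma_le[of V E] unfolding certified_dominating_set_def by metis

lemma cert_cases:
  assumes "finite V" "certified_dominating_set V E D" "v \<in> D"
  shows "(\<forall>u\<in>V - D. \<not> E v u) \<or> (\<exists>u1 u2. u1 \<in> V - D \<and> u2 \<in> V - D \<and> u1 \<noteq> u2 \<and> E v u1 \<and> E v u2)"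
proof -
  have f: "finite {u \<in> V - D. E v u}" using assms(1) by simp
  have "card {u \<in> V - D. E v u} = 0 \<or> card {u \<in> V - D. E v u} \<ge> 2"
    using assms unfolding certified_dominating_set_def by blast
  then show ?thesis
  proof
    assume "card {u \<in> V - D. E v u} = 0"
    then have "{u \<in> V - D. E v u} = {}" using f by simp
    then show ?thesis by blast
  next
    assume "card {u \<in> V - D. E v u} \<ge> 2"
    then show ?thesis using two_elems[OF f] by blast
  qed
qed

lemma cert_intro:
  assumes "finite V" "dominating_set V E D"
    "\<forall>v\<in>D. \<exists>u1 u2. u1 \<in> V - D \<and> u2 \<in> V - D \<and> u1 \<noteq> u2 \<and> E v u1 \<and> E v u2"
  shows "certified_dominating_set V E D"
  unfolding certified_dominating_set_def
proof (intro conjI assms(2) ballI disjI2)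
  fix v assume "v \<in> D"
  then obtain u1 u2 where "u1 \<in> V - D" "u2 \<in> V - D" "u1 \<noteq> u2" "E v u1" "E v u2" using assms(3) by blast
  then show "2 \<le> card {u \<in> V - D. E v u}" using assms(1) by (intro two_le_card[of _ u1 u2]) auto
qed

lemma rt_closed:
  assumes "(x, y) \<in> {(u, v). R u v}\<^sup>*" "x \<in> A" "\<forall>a\<in>A. \<forall>b. R a b \<longrightarrow> b \<in> A"
  shows "y \<in> A"
  using assms by (induction rule: rtrancl_induct) auto

lemma conn_not_disc:
  assumes "connected_graph S R" "\<forall>x y. R x y \<longrightarrow> x \<in> S \<and> y \<in> S"
  shows "\<not> disc R S"
proof
  assume "disc R S"
  then obtain A B where AB: "A \<union> B = S" "A \<inter> B = {}" "A \<noteq> {}" "B \<noteq> {}" "\<forall>a\<in>A. \<forall>b\<in>B. \<not> R a b"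
    unfolding disc_def by blast
  obtain a b where ab: "a \<in> A" "b \<in> B" using AB by blast
  then have "(a, b) \<in> {(u, v). R u v}\<^sup>*" using assms(1) AB(1) unfolding connected_graph_def by blast
  moreover have "\<forall>a\<in>A. \<forall>b. R a b \<longrightarrow> b \<in> A" using AB assms(2) by blast
  ultimately have "b \<in> A" using rt_closed ab by metis
  then show False using ab AB(2) by blast
qed

lemma conn_hub:
  assumes sym: "\<forall>x y. R x y \<longrightarrow> R y x" and w: "w \<in> S" and h: "\<forall>x\<in>S. (w, x) \<in> {(u, v). R u v}\<^sup>*"
  shows "connected_graph S R"
  unfolding connected_graph_def
proof (intro conjI ballI)
  show "S \<noteq> {}" using w by blast
  fix x y assume "x \<in> S" "y \<in> S"
  have c: "{(u, v). R u v}\<inverse> = {(u, v). R u v}" using sym by auto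
  have "(x, w) \<in> {(u, v). R u v}\<^sup>*" using rtrancl_converseI[OF h[rule_format, OF \<open>x \<in> S\<close>]] c by simp
  then show "(x, y) \<in> {(u, v). R u v}\<^sup>*" using h \<open>y \<in> S\<close> by (meson rtrancl_trans)
qed




lemma nb2: "(\<forall>u\<in>X. \<not> R v u) \<or> (\<exists>u1 u2. u1 \<in> X \<and> u2 \<in> X \<and> u1 \<noteq> u2 \<and> R v u1 \<and> R v u2)
  \<Longrightarrow> (\<And>u. R v u \<Longrightarrow> u = p \<or> u = q) \<Longrightarrow> p \<in> X \<Longrightarrow> R v p \<Longrightarrow> q \<in> X"
  by blast

lemma nb1: "(\<forall>u\<in>X. \<not> R v u) \<or> (\<exists>u1 u2. u1 \<in> X \<and> u2 \<in> X \<and> u1 \<noteq> u2 \<and> R v u1 \<and> R v u2)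
  \<Longrightarrow> (\<And>u. R v u \<Longrightarrow> u = p) \<Longrightarrow> p \<in> X \<Longrightarrow> R v p \<Longrightarrow> False"
  by blast

lemma P4_bad:
  assumes g: "simple_graph V E" and perf: "gamma_gamma_cer_perfect V E"
  shows "P4_free V E"
proof (rule ccontr)
  assume "\<not> P4_free V E"
  then obtain a b c d where m: "a \<in> V" "b \<in> V" "c \<in> V" "d \<in> V" and h: "distinct [a, b, c, d]"
     "E a b" "E b c" "E c d" "\<not> E a c" "\<not> E a d" "\<not> E b d"
    unfolding P4_free_def by blast
  have sym: "\<forall>x y. E x y \<longrightarrow> E y x" and irr: "\<forall>x. \<not> E x x" using g unfolding simple_graph_def by auto
  define S where "S = {a, b, c, d}"
  define R where "R = induced_edges E S"
  have Rc: "R x y \<longleftrightarrow> (x = a \<and> y = b) \<or> (x = b \<and> y = a) \<or> (x = b \<and> y = c) \<or> (x = c \<and> y = b)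
      \<or> (x = c \<and> y = d) \<or> (x = d \<and> y = c)" for x y
    unfolding R_def induced_edges_def S_def using h sym irr by auto
  have fS: "finite S" unfolding S_def by simp
  have SV: "S \<subseteq> V" unfolding S_def using m by auto
  have symR: "\<forall>x y. R x y \<longrightarrow> R y x" using Rc by auto
  have conn: "connected_graph S R"
  proof (rule conn_hub[OF symR, of b])
    show "b \<in> S" unfolding S_def by simp
    have 1: "(b, a) \<in> {(u, v). R u v}\<^sup>*" "(b, c) \<in> {(u, v). R u v}\<^sup>*" using Rc by auto
    have "(c, d) \<in> {(u, v). R u v}\<^sup>*" using Rc by auto
    then have "(b, d) \<in> {(u, v). R u v}\<^sup>*" using 1 by (meson rtrancl_trans)
    then show "\<forall>x\<in>S. (b, x) \<in> {(u, v). R u v}\<^sup>*" using 1 unfolding S_def by auto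
  qed
  have c4: "card S = 4" unfolding S_def using h by simp
  then have nk: "\<not> is_K2 S R" unfolding is_K2_def by simp
  have eq: "domination_number S R = certified_domination_number S R"
    using perf SV conn nk unfolding gamma_gamma_cer_perfect_def R_def by blast
  have "dominating_set S R {b, c}" unfolding dominating_set_def S_def using Rc by auto
  then have g2: "domination_number S R \<le> 2" using gamma_le[OF fS] h by fastforce
  obtain D where D: "certified_dominating_set S R D" "certified_domination_number S R = card D"
    using cer_ex[OF fS] by blast
  have DS: "D \<subseteq> S" and dom: "\<forall>v\<in>S - D. \<exists>u\<in>D. R v u"
    using D(1) unfolding certified_dominating_set_def dominating_set_def by auto
  have cc: "\<And>v. v \<in> D \<Longrightarrow> (\<forall>u\<in>S - D. \<not> R v u) \<or> (\<exists>u1 u2. u1 \<in> S - D \<and> u2 \<in> S - D \<and> u1 \<noteq> u2 \<and> R v u1 \<and> R v u2)"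
    using cert_cases[OF fS D(1)] by blast
  have inS: "a \<in> S" "b \<in> S" "c \<in> S" "d \<in> S" unfolding S_def by auto
  have nba: "\<And>u. R a u \<Longrightarrow> u = b" and nbb: "\<And>u. R b u \<Longrightarrow> u = a \<or> u = c"
    and nbc: "\<And>u. R c u \<Longrightarrow> u = b \<or> u = d" and nbd: "\<And>u. R d u \<Longrightarrow> u = c"
    using h(1) by (auto simp: Rc)
  have nbc': "\<And>u. R c u \<Longrightarrow> u = d \<or> u = b" using nbc by blast
  have e: "R a b" "R b a" "R b c" "R c b" "R c d" "R d c" by (auto simp: Rc)
  have aD: "a \<in> D"
  proof (rule ccontr)
    assume na: "a \<notin> D"
    then have "\<exists>u\<in>D. R a u" using dom inS by blast
    then have bD: "b \<in> D" using nba by blast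
    have "c \<in> S - D" using nb2[of "S - D" R b a c, OF cc[OF bD] nbb] na inS e by blast
    then have "d \<in> D"
    proof -
      assume cS: "c \<in> S - D"
      show "d \<in> D"
      proof (rule ccontr)
        assume "d \<notin> D"
        then obtain u where "u \<in> D" "R d u" using dom inS by blast
        then show False using nbd cS by blast
      qed
    qed
    then show False using nb1[of "S - D" R d c, OF cc[OF \<open>d \<in> D\<close>] nbd] \<open>c \<in> S - D\<close> e by blast
  qed
  have dD: "d \<in> D"
  proof (rule ccontr)
    assume na: "d \<notin> D"
    then have "\<exists>u\<in>D. R d u" using dom inS by blast
    then have cD: "c \<in> D" using nbd by blast
    have "b \<in> S - D" using nb2[of "S - D" R c d b, OF cc[OF cD] nbc'] na inS e by blast
    then have "a \<in> D"
    proof -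
      assume bS: "b \<in> S - D"
      show "a \<in> D"
      proof (rule ccontr)
        assume "a \<notin> D"
        then obtain u where "u \<in> D" "R a u" using dom inS by blast
        then show False using nba bS by blast
      qed
    qed
    then show False using nb1[of "S - D" R a b, OF cc[OF \<open>a \<in> D\<close>] nba] \<open>b \<in> S - D\<close> e by blast
  qed
  have bD: "b \<in> D"
  proof (rule ccontr)
    assume "b \<notin> D" then show False using nb1[of "S - D" R a b, OF cc[OF aD] nba] inS e by blast
  qed
  have cD: "c \<in> D"
  proof (rule ccontr)
    assume "c \<notin> D" then show False using nb1[of "S - D" R d c, OF cc[OF dD] nbd] inS e by blast
  qed
  have "D = S" using DS aD bD cD dD unfolding S_def by auto
  then show False using D(2) eq g2 c4 by simp
qed




lemma gamma_ge1: "finite S \<Longrightarrow> S \<noteq> {} \<Longrightarrow> 1 \<le> domination_number S R"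
proof -
  assume f: "finite S" "S \<noteq> {}"
  obtain D where D: "dominating_set S R D" "domination_number S R = card D" using gamma_ex[OF f(1)] by blast
  have "D \<noteq> {}" using D(1) f(2) unfolding dominating_set_def by auto
  moreover have "finite D" using D(1) f(1) finite_subset unfolding dominating_set_def by blast
  ultimately show ?thesis using D(2) by (simp add: Suc_le_eq card_gt_0_iff)
qed

lemma join_cert:
  assumes f: "finite S" and AB: "A \<union> B = S" "A \<inter> B = {}" and RAB: "\<forall>a\<in>A. \<forall>b\<in>B. R a b \<and> R b a"
    and cA: "card A = 2" and cB: "2 \<le> card B"
  shows "certified_domination_number S R \<le> 2"
proof -
  have fB: "finite B" using f AB by auto
  obtain b1 b2 where b: "b1 \<in> B" "b2 \<in> B" "b1 \<noteq> b2" using two_elems[OF fB cB] by blast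
  obtain a0 where a0: "a0 \<in> A" using cA by (metis card.empty ex_in_conv zero_neq_numeral)
  have "dominating_set S R A" unfolding dominating_set_def
  proof (intro conjI ballI)
    show "A \<subseteq> S" using AB by blast
    fix w assume "w \<in> S - A"
    then have "w \<in> B" using AB by blast
    then show "\<exists>u\<in>A. R w u" using a0 RAB by blast
  qed
  moreover have "\<forall>v\<in>A. \<exists>u1 u2. u1 \<in> S - A \<and> u2 \<in> S - A \<and> u1 \<noteq> u2 \<and> R v u1 \<and> R v u2"
    using AB RAB b by blast
  ultimately have "certified_dominating_set S R A" using cert_intro f by blast
  then show ?thesis using cer_le[OF f] cA by metis
qed

lemma P4_free_induced: assumes "P4_free V E" "S \<subseteq> V" shows "P4_free S (induced_edges E S)"
  unfolding P4_free_def
proof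
  assume "\<exists>a\<in>S. \<exists>b\<in>S. \<exists>c\<in>S. \<exists>d\<in>S. distinct [a, b, c, d] \<and> induced_edges E S a b \<and> induced_edges E S b c \<and> induced_edges E S c d \<and>
     \<not> induced_edges E S a c \<and> \<not> induced_edges E S a d \<and> \<not> induced_edges E S b d"
  then obtain a b c d where m: "a\<in>S" "b\<in>S" "c\<in>S" "d\<in>S" and h: "distinct [a, b, c, d]" "induced_edges E S a b" "induced_edges E S b c" "induced_edges E S c d"
     "\<not> induced_edges E S a c" "\<not> induced_edges E S a d" "\<not> induced_edges E S b d" by blast
  have "E a b" "E b c" "E c d" "\<not> E a c" "\<not> E a d" "\<not> E b d" using h m unfolding induced_edges_def by auto
  moreover have "a \<in> V" "b \<in> V" "c \<in> V" "d \<in> V" using m assms(2) by auto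
  ultimately show False using h(1) assms(1) unfolding P4_free_def by blast
qed

lemma P4_good:
  assumes g: "simple_graph V E" and p4V: "P4_free V E"
  shows "gamma_gamma_cer_perfect V E"
  unfolding gamma_gamma_cer_perfect_def
proof (intro allI impI)
  fix S assume SV: "S \<subseteq> V" and hS: "connected_graph S (induced_edges E S) \<and> \<not> is_K2 S (induced_edges E S)"
  define R where "R = induced_edges E S"
  have conn: "connected_graph S R" and nk: "\<not> is_K2 S R" using hS R_def by auto
  have fS: "finite S" using g SV finite_subset unfolding simple_graph_def by blast
  have sym: "\<forall>x y. R x y \<longrightarrow> R y x" and irr: "\<forall>x. \<not> R x x" and RS: "\<forall>x y. R x y \<longrightarrow> x \<in> S \<and> y \<in> S"
    using g unfolding simple_graph_def R_def induced_edges_def by auto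
  have p4: "P4_free S R" using P4_free_induced[OF p4V SV] R_def by simp
  have Sne: "S \<noteq> {}" using conn unfolding connected_graph_def by auto
  have ndisc: "\<not> disc R S" using conn_not_disc[OF conn RS] .
  have le: "domination_number S R \<le> certified_domination_number S R" using gamma_le_cer[OF fS] .
  have ge1: "1 \<le> domination_number S R" using gamma_ge1[OF fS Sne] .
  have "certified_domination_number S R \<le> domination_number S R"
  proof (cases "card S = 1")
    case True
    then obtain u where u: "S = {u}" using card_1_singleton_iff by (metis One_nat_def)
    have "certified_dominating_set S R S" by (rule cert_V)
    then show ?thesis using cer_le[OF fS] True ge1 by fastforce
  next
    case False
    have c2: "card S \<noteq> 2"
    proof
      assume "card S = 2"
      then obtain x y where xy: "S = {x, y}" "x \<noteq> y" by (meson card_2_iff)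
      have "R x y"
      proof (rule ccontr)
        assume "\<not> R x y"
        then have "disc R S"
          apply (intro disc_intro[of "{x}" "{y}"]) using xy sym by auto
        then show False using ndisc by blast
      qed
      then have "is_K2 S R" unfolding is_K2_def using \<open>card S = 2\<close> xy sym by auto
      then show False using nk by blast
    qed
    have c0: "card S \<noteq> 0" using Sne fS by simp
    have c3: "3 \<le> card S" using False c2 c0 by linarith
    have "disc R S \<or> disc (cgr R) S" using cograph[OF fS sym irr p4] c3 by simp
    then have "disc (cgr R) S" using ndisc by blast
    then obtain A B where AB: "A \<union> B = S" "A \<inter> B = {}" "A \<noteq> {}" "B \<noteq> {}" 
      and RAB0: "\<forall>a\<in>A. \<forall>b\<in>B. \<not> cgr R a b" unfolding disc_def by blast
    have RAB: "\<forall>a\<in>A. \<forall>b\<in>B. R a b \<and> R b a"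
    proof (intro ballI)
      fix a b assume ab: "a \<in> A" "b \<in> B"
      then have "a \<noteq> b" using AB(2) by blast
      moreover have "\<not> cgr R a b" using RAB0 ab by blast
      ultimately have "R a b" unfolding cgr_def by simp
      then show "R a b \<and> R b a" using sym by blast
    qed
    have BA: "\<forall>a\<in>B. \<forall>b\<in>A. R a b \<and> R b a" using RAB by blast
    have fA: "finite A" and fB: "finite B" using fS AB by auto
    show ?thesis
    proof (cases "\<exists>u\<in>S. \<forall>w\<in>S - {u}. R u w")
      case True
      then obtain u where u: "u \<in> S" "\<forall>w\<in>S - {u}. R u w" by blast
      have "card (S - {u}) \<ge> 2" using c3 u(1) fS by simp
      then obtain w1 w2 where w: "w1 \<in> S - {u}" "w2 \<in> S - {u}" "w1 \<noteq> w2"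
        using two_elems[of "S - {u}"] fS by blast
      have "dominating_set S R {u}" unfolding dominating_set_def
      proof (intro conjI ballI)
        show "{u} \<subseteq> S" using u by blast
        fix w assume "w \<in> S - {u}"
        then have "R u w" using u by blast
        then show "\<exists>x\<in>{u}. R w x" using sym by blast
      qed
      moreover have "\<forall>v\<in>{u}. \<exists>u1 u2. u1 \<in> S - {u} \<and> u2 \<in> S - {u} \<and> u1 \<noteq> u2 \<and> R v u1 \<and> R v u2"
        using u w by blast
      ultimately have "certified_dominating_set S R {u}" using cert_intro fS by blast
      then show ?thesis using cer_le[OF fS] ge1 by fastforce
    next
      case nodom: False
      have ge2: "2 \<le> domination_number S R"
      proof -
        obtain D where D: "dominating_set S R D" "domination_number S R = card D" using gamma_ex[OF fS] by blast
        have fD: "finite D" using D(1) fS finite_subset unfolding dominating_set_def by blast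
        have "D \<noteq> {}" using D(1) Sne unfolding dominating_set_def by auto
        moreover have "\<not> (\<exists>u. D = {u})"
        proof
          assume "\<exists>u. D = {u}"
          then obtain u where "D = {u}" by blast
          then have uS: "u \<in> S" and dw: "\<forall>w\<in>S - {u}. \<exists>x\<in>{u}. R w x"
            using D(1) unfolding dominating_set_def by auto
          have "\<forall>w\<in>S - {u}. R u w"
          proof
            fix w assume "w \<in> S - {u}"
            then have "R w u" using dw by blast
            then show "R u w" using sym by blast
          qed
          then show False using nodom uS by blast
        qed
        ultimately have "\<not> card D \<le> 1" using fD card_le_Suc0_iff_eq[OF fD] by auto
        then show ?thesis using D(2) by simp
      qed
      have cA: "2 \<le> card A"
      proof (rule ccontr)
        assume "\<not> 2 \<le> card A"
        moreover have "card A \<noteq> 0" using AB(3) fA by simp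
        ultimately have "card A = 1" by linarith
        then obtain a where a: "A = {a}" using card_1_singleton_iff by (metis One_nat_def)
        have "a \<in> S" using a AB(1) by blast
        moreover have "\<forall>w\<in>S - {a}. R a w"
        proof
          fix w assume "w \<in> S - {a}"
          then have "w \<in> B" using a AB(1) by blast
          then show "R a w" using RAB a by blast
        qed
        ultimately show False using nodom by blast
      qed
      have cB: "2 \<le> card B"
      proof (rule ccontr)
        assume "\<not> 2 \<le> card B"
        moreover have "card B \<noteq> 0" using AB(4) fB by simp
        ultimately have "card B = 1" by linarith
        then obtain b where b: "B = {b}" using card_1_singleton_iff by (metis One_nat_def)
        have "b \<in> S" using b AB(1) by blast
        moreover have "\<forall>w\<in>S - {b}. R b w"
        proof
          fix w assume "w \<in> S - {b}"
          then have "w \<in> A" using b AB(1) by blast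
          then show "R b w" using RAB b by blast
        qed
        ultimately show False using nodom by blast
      qed
      have "certified_domination_number S R \<le> 2"
      proof (cases "card A = 2")
        case True
        then show ?thesis using join_cert[OF fS AB(1,2) RAB True cB] by blast
      next
        case nA: False
        show ?thesis
        proof (cases "card B = 2")
          case True
          have "B \<union> A = S" "B \<inter> A = {}" using AB by auto
          then show ?thesis using join_cert[OF fS _ _ BA True cA] by blast
        next
          case nB: False
          obtain a1 where a1: "a1 \<in> A" using AB by blast
          obtain b1 where b1: "b1 \<in> B" using AB by blast
          have "card (A - {a1}) \<ge> 2" using cA nA a1 fA by simp
          then obtain x1 x2 where x: "x1 \<in> A - {a1}" "x2 \<in> A - {a1}" "x1 \<noteq> x2"
            using two_elems[of "A - {a1}"] fA by blast
          have "card (B - {b1}) \<ge> 2" using cB nB b1 fB by simp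
          then obtain y1 y2 where y: "y1 \<in> B - {b1}" "y2 \<in> B - {b1}" "y1 \<noteq> y2"
            using two_elems[of "B - {b1}"] fB by blast
          have ab: "a1 \<noteq> b1" using a1 b1 AB(2) by blast
          have "dominating_set S R {a1, b1}" unfolding dominating_set_def
          proof (intro conjI ballI)
            show "{a1, b1} \<subseteq> S" using a1 b1 AB(1) by blast
            fix w assume "w \<in> S - {a1, b1}"
            then have "w \<in> A \<or> w \<in> B" using AB(1) by blast
            then show "\<exists>x\<in>{a1, b1}. R w x"
            proof
              assume "w \<in> A" then have "R w b1" using RAB b1 by blast
              then show ?thesis by blast
            next
              assume "w \<in> B" then have "R w a1" using BA a1 by blast
              then show ?thesis by blast
            qed
          qed
          moreover have "\<forall>v\<in>{a1, b1}. \<exists>u1 u2. u1 \<in> S - {a1, b1} \<and> u2 \<in> S - {a1, b1} \<and> u1 \<noteq> u2 \<and> R v u1 \<and> R v u2"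
          proof
            fix v assume "v \<in> {a1, b1}"
            then show "\<exists>u1 u2. u1 \<in> S - {a1, b1} \<and> u2 \<in> S - {a1, b1} \<and> u1 \<noteq> u2 \<and> R v u1 \<and> R v u2"
            proof
              assume "v = a1"
              moreover have "y1 \<in> S - {a1, b1}" "y2 \<in> S - {a1, b1}" using y AB a1 by auto
              moreover have "R a1 y1" "R a1 y2" using y RAB a1 by auto
              ultimately show ?thesis using y(3) by blast
            next
              assume "v \<in> {b1}"
              then have vb: "v = b1" by simp
              have "x1 \<in> S - {a1, b1}" "x2 \<in> S - {a1, b1}" using x AB b1 by auto
              moreover have "R b1 x1" "R b1 x2" using x BA b1 by auto
              ultimately show ?thesis using x(3) vb by blast
            qed
          qed
          ultimately have "certified_dominating_set S R {a1, b1}" using cert_intro fS by blast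
          then show ?thesis using cer_le[OF fS] ab by fastforce
        qed
      qed
      then show ?thesis using ge2 by simp
    qed
  qed
  then show "domination_number S (induced_edges E S) = certified_domination_number S (induced_edges E S)"
    using le R_def by simp
qed


theorem corollary2p8:
  fixes V :: "'a set" and E :: "'a \<Rightarrow> 'a \<Rightarrow> bool"
  assumes "simple_graph V E"
  shows "gamma_gamma_cer_perfect V E \<longleftrightarrow> P4_free V E"
  using P4_bad[OF assms] P4_good[OF assms] by blast

end
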